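(* For the asynchronous Sinkhorn iteration described in the context, the iterates $(u^{(\ell)},v^{(\ell)})$ converge to a solution $(u,v)\in\mathbb R_{++}^X\times\mathbb R_{++}^Y$ of the scaling problem, i.e. $\mathrm{diag}(u)K\mathrm{diag}(v)$ has row sums $\mu$ and column sums $\nu$, and $q^{(\ell)}\to1$.
   Context: $X,Y$ finite sets, $\mu\in\mathcal P(X)$, $\nu\in\mathcal P(Y)$ with strictly positive entries, $c\in\mathbb R_+^{X\times Y}$, $\varepsilon>0$, kernel $K(x,y)=\exp(-c(x,y)/\varepsilon)\mu(x)\nu(y)$. Asynchronous Sinkhorn iteration: given $v^{(0)}\in\mathbb R_{++}^Y$, for $\ell\ge0$: $u^{(\ell+1)}=\mu\oslash(Kv^{(\ell)})$, $\hat v^{(\ell+1)}=\nu\oslash(K^\top u^{(\ell+1)})$, $v^{(\ell+1)}=\min\{v^{(\ell)},\hat v^{(\ell+1)}\}$ componentwise, $\pi^{(\ell+1)}=\mathrm{diag}(u^{(\ell+1)})K\mathrm{diag}(v^{(\ell+1)})$, $q^{(\ell+1)}=\sum_{x,y}\pi^{(\ell+1)}(x,y)$; $\oslash$ is componentwise division. *)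

theory Defs
  imports "HOL-Analysis.Analysis"
begin

definition kernel :: "('x \<Rightarrow> real) \<Rightarrow> ('y \<Rightarrow> real) \<Rightarrow> ('x \<Rightarrow> 'y \<Rightarrow> real) \<Rightarrow> real
                      \<Rightarrow> 'x \<Rightarrow> 'y \<Rightarrow> real" where
  "kernel \<mu> \<nu> c \<epsilon> x y = exp (- c x y / \<epsilon>) * \<mu> x * \<nu> y"

definition u_upd :: "('x::finite \<Rightarrow> real) \<Rightarrow> ('x \<Rightarrow> 'y::finite \<Rightarrow> real) \<Rightarrow> ('y \<Rightarrow> real) \<Rightarrow> 'x \<Rightarrow> real" where
  "u_upd \<mu> K v x = \<mu> x / (\<Sum>y\<in>UNIV. K x y * v y)"

definition v_upd :: "('y::finite \<Rightarrow> real) \<Rightarrow> ('x::finite \<Rightarrow> 'y \<Rightarrow> real) \<Rightarrow> ('x \<Rightarrow> real) \<Rightarrow> 'y \<Rightarrow> real" where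
  "v_upd \<nu> K u y = \<nu> y / (\<Sum>x\<in>UNIV. K x y * u x)"

primrec async_v :: "('x::finite \<Rightarrow> real) \<Rightarrow> ('y::finite \<Rightarrow> real) \<Rightarrow> ('x \<Rightarrow> 'y \<Rightarrow> real)
                    \<Rightarrow> ('y \<Rightarrow> real) \<Rightarrow> nat \<Rightarrow> 'y \<Rightarrow> real" where
  "async_v \<mu> \<nu> K v0 0 = v0"
| "async_v \<mu> \<nu> K v0 (Suc l) =
     (let u = u_upd \<mu> K (async_v \<mu> \<nu> K v0 l)
      in (\<lambda>y. min (async_v \<mu> \<nu> K v0 l y) (v_upd \<nu> K u y)))"

text \<open>u^(l+1) = mu ./ (K v^(l)); async_u ... l denotes u^(l+1).\<close>
definition async_u :: "('x::finite \<Rightarrow> real) \<Rightarrow> ('y::finite \<Rightarrow> real) \<Rightarrow> ('x \<Rightarrow> 'y \<Rightarrow> real)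
                    \<Rightarrow> ('y \<Rightarrow> real) \<Rightarrow> nat \<Rightarrow> 'x \<Rightarrow> real" where
  "async_u \<mu> \<nu> K v0 l = u_upd \<mu> K (async_v \<mu> \<nu> K v0 l)"

text \<open>q^(l+1) = total mass of diag(u^(l+1)) K diag(v^(l+1)).\<close>
definition async_q :: "('x::finite \<Rightarrow> real) \<Rightarrow> ('y::finite \<Rightarrow> real) \<Rightarrow> ('x \<Rightarrow> 'y \<Rightarrow> real)
                    \<Rightarrow> ('y \<Rightarrow> real) \<Rightarrow> nat \<Rightarrow> real" where
  "async_q \<mu> \<nu> K v0 l =
     (\<Sum>x\<in>UNIV. \<Sum>y\<in>UNIV. async_u \<mu> \<nu> K v0 l x * K x y * async_v \<mu> \<nu> K v0 (Suc l) y)"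

end

theory Submission
  imports Defs
begin

lemma ln_lt_m1: "(x::real) > 1 \<Longrightarrow> ln x < x - 1"
  by (smt (verit) ln_eq_minus_one ln_le_minus_one)

locale sk =
  fixes \<mu> :: "'x::finite \<Rightarrow> real" and \<nu> :: "'y::finite \<Rightarrow> real" and K :: "'x \<Rightarrow> 'y \<Rightarrow> real"
  assumes mu_pos: "\<And>x. \<mu> x > 0" and nu_pos: "\<And>y. \<nu> y > 0"
    and mu_sum: "(\<Sum>x\<in>UNIV. \<mu> x) = 1" and nu_sum: "(\<Sum>y\<in>UNIV. \<nu> y) = 1"
    and K_pos: "\<And>x y. K x y > 0"
begin

definition Kv :: "('y \<Rightarrow> real) \<Rightarrow> 'x \<Rightarrow> real" where "Kv v x = (\<Sum>y\<in>UNIV. K x y * v y)"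
definition W :: "('x \<Rightarrow> real) \<Rightarrow> 'y \<Rightarrow> real" where "W u y = (\<Sum>x\<in>UNIV. K x y * u x)"
definition T :: "('y \<Rightarrow> real) \<Rightarrow> 'y \<Rightarrow> real" where "T v = v_upd \<nu> K (u_upd \<mu> K v)"
definition F :: "('y \<Rightarrow> real) \<Rightarrow> real" where
  "F v = (\<Sum>x\<in>UNIV. \<mu> x * ln (Kv v x)) - (\<Sum>y\<in>UNIV. \<nu> y * ln (v y))"

lemma u_eq: "u_upd \<mu> K v x = \<mu> x / Kv v x" by (simp add: u_upd_def Kv_def)
lemma T_eq: "T v y = \<nu> y / W (u_upd \<mu> K v) y" by (simp add: T_def v_upd_def W_def)

lemma Kv_pos: "(\<And>y. v y > 0) \<Longrightarrow> Kv v x > 0"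
  unfolding Kv_def by (rule sum_pos) (auto intro: mult_pos_pos K_pos)
lemma W_pos: "(\<And>x. u x > 0) \<Longrightarrow> W u y > 0"
  unfolding W_def by (rule sum_pos) (auto intro: mult_pos_pos K_pos)
lemma u_pos: "(\<And>y. v y > 0) \<Longrightarrow> u_upd \<mu> K v x > 0"
  unfolding u_eq using Kv_pos mu_pos by (simp add: divide_pos_pos)
lemma T_pos: "(\<And>y. v y > 0) \<Longrightarrow> T v y > 0"
  unfolding T_eq using W_pos[OF u_pos] nu_pos by (simp add: divide_pos_pos)

lemma swap_id: "(\<Sum>y\<in>UNIV. W u y * v y) = (\<Sum>x\<in>UNIV. u x * Kv v x)"
  unfolding W_def Kv_def sum_distrib_left sum_distrib_right
  by (subst sum.swap) (simp add: algebra_simps)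

lemma uKv: "(\<And>y. v y > 0) \<Longrightarrow> u_upd \<mu> K v x * Kv v x = \<mu> x"
  unfolding u_eq using Kv_pos[of v x] by simp

lemma Wu_pos: "(\<And>y. v y > 0) \<Longrightarrow> W (u_upd \<mu> K v) y > 0"
  by (intro W_pos u_pos) auto

lemma WT: "(\<And>y. v y > 0) \<Longrightarrow> W (u_upd \<mu> K v) y * T v y = \<nu> y"
  unfolding T_eq using Wu_pos[of v y] by simp

lemma fix_of_ge:
  assumes vp: "\<And>y. v y > 0" and ge: "\<And>y. v y \<le> T v y"
  shows "T v y = v y"
proof -
  let ?u = "u_upd \<mu> K v"
  have s1: "(\<Sum>y\<in>UNIV. W ?u y * v y) = 1"
    unfolding swap_id using uKv[OF vp] mu_sum by simp
  have s2: "(\<Sum>y\<in>UNIV. W ?u y * T v y) = 1"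
    using WT[OF vp] nu_sum by simp
  have "(\<Sum>y\<in>UNIV. W ?u y * (T v y - v y)) = 0"
    using s1 s2 by (simp add: right_diff_distrib sum_subtractf)
  moreover have "\<forall>y\<in>UNIV. 0 \<le> W ?u y * (T v y - v y)"
    using ge Wu_pos[OF vp] by (simp add: less_imp_le)
  ultimately have "W ?u y * (T v y - v y) = 0"
    using sum_nonneg_eq_0_iff[of UNIV "\<lambda>y. W ?u y * (T v y - v y)"] by simp
  then show ?thesis using Wu_pos[of v y, OF vp] by simp
qed

lemma descent:
  assumes vp: "\<And>y. v y > 0" and y0: "T v y0 < v y0"
  shows "F (\<lambda>y. min (v y) (T v y)) < F v"
proof -
  define v' where "v' = (\<lambda>y. min (v y) (T v y))"
  define u where "u = u_upd \<mu> K v"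
  have v'p: "v' y > 0" for y using vp T_pos[OF vp] by (simp add: v'_def)
  have up: "u x > 0" for x using u_pos[OF vp] by (simp add: u_def)
  have l1: "\<mu> x * ln (Kv v' x) \<le> \<mu> x * ln (Kv v x) + u x * (Kv v' x - Kv v x)" for x
  proof -
    have a: "Kv v' x > 0" "Kv v x > 0" using Kv_pos v'p vp by auto
    have "ln (Kv v' x) - ln (Kv v x) = ln (Kv v' x / Kv v x)" using a by (simp add: ln_div)
    also have "\<dots> \<le> Kv v' x / Kv v x - 1" using a by (intro ln_le_minus_one) simp
    also have "\<dots> = (Kv v' x - Kv v x) / Kv v x" using a by (simp add: field_simps)
    finally have h: "ln (Kv v' x) - ln (Kv v x) \<le> (Kv v' x - Kv v x) / Kv v x" .
    have "\<mu> x * (ln (Kv v' x) - ln (Kv v x)) \<le> \<mu> x * ((Kv v' x - Kv v x) / Kv v x)"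
      by (rule mult_left_mono[OF h]) (use mu_pos[of x] in simp)
    moreover have "\<mu> x * ((Kv v' x - Kv v x) / Kv v x) = u x * (Kv v' x - Kv v x)"
      unfolding u_def u_eq by simp
    ultimately show ?thesis by (simp add: algebra_simps)
  qed
  have "(\<Sum>x\<in>UNIV. \<mu> x * ln (Kv v' x)) \<le> (\<Sum>x\<in>UNIV. \<mu> x * ln (Kv v x) + u x * (Kv v' x - Kv v x))"
    by (rule sum_mono) (rule l1)
  also have "\<dots> = (\<Sum>x\<in>UNIV. \<mu> x * ln (Kv v x)) + ((\<Sum>x\<in>UNIV. u x * Kv v' x) - (\<Sum>x\<in>UNIV. u x * Kv v x))"
    by (simp add: sum.distrib right_diff_distrib sum_subtractf)
  also have "\<dots> = (\<Sum>x\<in>UNIV. \<mu> x * ln (Kv v x)) + (\<Sum>y\<in>UNIV. W u y * (v' y - v y))"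
    by (simp add: swap_id[symmetric] right_diff_distrib sum_subtractf)
  finally have A: "(\<Sum>x\<in>UNIV. \<mu> x * ln (Kv v' x)) \<le> (\<Sum>x\<in>UNIV. \<mu> x * ln (Kv v x)) + (\<Sum>y\<in>UNIV. W u y * (v' y - v y))" .
  define g where "g y = W u y * (v' y - v y) - \<nu> y * (ln (v' y) - ln (v y))" for y
  have g_neg: "g y < 0" if "T v y < v y" for y
  proof -
    have e: "v' y = T v y" using that by (simp add: v'_def)
    have b: "T v y > 0" using T_pos[OF vp] .
    have Wb: "W u y * T v y = \<nu> y" using WT[OF vp] by (simp add: u_def)
    have Wp: "W u y > 0" using W_pos[OF up] .
    have "ln (v y) - ln (T v y) = ln (v y / T v y)" using b vp[of y] by (simp add: ln_div)
    also have "\<dots> < v y / T v y - 1" using that b by (intro ln_lt_m1) simp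
    finally have "\<nu> y * (ln (v y) - ln (T v y)) < \<nu> y * (v y / T v y - 1)"
      using nu_pos[of y] by (simp add: mult_strict_left_mono)
    also have "\<nu> y * (v y / T v y - 1) = W u y * v y - W u y * T v y"
      using b Wb[symmetric] by (simp add: field_simps)
    finally show ?thesis unfolding g_def e by (simp add: algebra_simps)
  qed
  have g_le: "g y \<le> 0" for y
  proof (cases "T v y < v y")
    case True then show ?thesis using g_neg by (simp add: less_imp_le)
  next
    case False then have "v' y = v y" by (simp add: v'_def)
    then show ?thesis by (simp add: g_def)
  qed
  have "(\<Sum>y\<in>UNIV. g y) = g y0 + (\<Sum>y\<in>UNIV - {y0}. g y)"
    by (simp add: sum.remove)
  also have "\<dots> < 0" using g_neg[OF y0] sum_nonpos[of "UNIV - {y0}" g] g_le by force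
  finally have gs: "(\<Sum>y\<in>UNIV. g y) < 0" .
  have "F v' - F v \<le> (\<Sum>y\<in>UNIV. W u y * (v' y - v y)) - ((\<Sum>y\<in>UNIV. \<nu> y * ln (v' y)) - (\<Sum>y\<in>UNIV. \<nu> y * ln (v y)))"
    using A unfolding F_def by simp
  also have "\<dots> = (\<Sum>y\<in>UNIV. g y)"
    unfolding g_def by (simp add: sum_subtractf right_diff_distrib)
  finally show ?thesis using gs by (simp add: v'_def)
qed

lemma T_mono:
  assumes "\<And>y. v y > 0" "\<And>y. v y \<le> w y"
  shows "T v y \<le> T w y"
proof -
  have wp: "\<And>y. w y > 0" using assms by (meson less_le_trans)
  have "Kv v x \<le> Kv w x" for x unfolding Kv_def
    by (rule sum_mono) (simp add: assms(2) K_pos less_imp_le mult_left_mono)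
  moreover have "Kv v x > 0" "Kv w x > 0" for x using Kv_pos assms(1) wp by auto
  ultimately have "u_upd \<mu> K w x \<le> u_upd \<mu> K v x" for x
    unfolding u_eq using mu_pos[of x]
    by (intro divide_left_mono) (auto intro: less_imp_le mult_pos_pos)
  then have "W (u_upd \<mu> K w) y \<le> W (u_upd \<mu> K v) y" unfolding W_def
    by (intro sum_mono) (simp add: K_pos less_imp_le mult_left_mono)
  then show ?thesis unfolding T_eq using Wu_pos[of w y, OF wp] Wu_pos[of v y, OF assms(1)] nu_pos[of y]
    by (intro divide_left_mono) (auto intro: less_imp_le mult_pos_pos)
qed

lemma T_hom:
  assumes "t > 0" shows "T (\<lambda>y. t * v y) y = t * T v y"
proof -
  have "Kv (\<lambda>y. t * v y) x = t * Kv v x" for x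
    unfolding Kv_def by (simp add: sum_distrib_left algebra_simps)
  then have "u_upd \<mu> K (\<lambda>y. t * v y) x = u_upd \<mu> K v x / t" for x
    unfolding u_eq by simp
  then have "W (u_upd \<mu> K (\<lambda>y. t * v y)) y = W (u_upd \<mu> K v) y / t"
    unfolding W_def by (simp add: sum_divide_distrib)
  then show ?thesis unfolding T_eq using assms by simp
qed


lemma Kv_div: "Kv (\<lambda>y. v y / t) x = Kv v x / t"
  unfolding Kv_def by (simp add: sum_divide_distrib)

lemma F_hom:
  assumes vp: "\<And>y. v y > 0" and t: "t > 0"
  shows "F (\<lambda>y. v y / t) = F v"
proof -
  have a: "(\<Sum>x\<in>UNIV. \<mu> x * ln (Kv (\<lambda>y. v y / t) x)) = (\<Sum>x\<in>UNIV. \<mu> x * ln (Kv v x)) - ln t"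
  proof -
    have "(\<Sum>x\<in>UNIV. \<mu> x * ln (Kv (\<lambda>y. v y / t) x)) = (\<Sum>x\<in>UNIV. \<mu> x * ln (Kv v x) - \<mu> x * ln t)"
    proof (intro sum.cong refl)
      fix x
      have "Kv v x > 0" using Kv_pos vp by blast
      then show "\<mu> x * ln (Kv (\<lambda>y. v y / t) x) = \<mu> x * ln (Kv v x) - \<mu> x * ln t"
        using t by (simp add: Kv_div ln_div right_diff_distrib)
    qed
    also have "\<dots> = (\<Sum>x\<in>UNIV. \<mu> x * ln (Kv v x)) - ln t"
      by (simp add: sum_subtractf sum_distrib_right[symmetric] mu_sum)
    finally show ?thesis .
  qed
  have b: "(\<Sum>y\<in>UNIV. \<nu> y * ln (v y / t)) = (\<Sum>y\<in>UNIV. \<nu> y * ln (v y)) - ln t"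
  proof -
    have "(\<Sum>y\<in>UNIV. \<nu> y * ln (v y / t)) = (\<Sum>y\<in>UNIV. \<nu> y * ln (v y) - \<nu> y * ln t)"
    proof (intro sum.cong refl)
      fix y
      have "v y > 0" using vp by blast
      then show "\<nu> y * ln (v y / t) = \<nu> y * ln (v y) - \<nu> y * ln t"
        using t by (simp add: ln_div right_diff_distrib)
    qed
    also have "\<dots> = (\<Sum>y\<in>UNIV. \<nu> y * ln (v y)) - ln t"
      by (simp add: sum_subtractf sum_distrib_right[symmetric] nu_sum)
    finally show ?thesis .
  qed
  show ?thesis unfolding F_def a b by simp
qed

definition Lb :: real where "Lb = Min (range (\<lambda>y1. \<Sum>x\<in>UNIV. \<mu> x * ln (K x y1)))"

lemma F_lower:
  assumes vp: "\<And>y. v y > 0" and le1: "\<And>y. v y \<le> 1" and y1: "v y1 = 1"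
  shows "Lb - \<nu> y0 * ln (v y0) \<le> F v"
proof -
  have "K x y1 \<le> Kv v x" for x
  proof -
    have "K x y1 * v y1 \<le> Kv v x" unfolding Kv_def
      by (rule member_le_sum) (auto intro: less_imp_le mult_pos_pos K_pos vp)
    then show ?thesis using y1 by simp
  qed
  then have "ln (K x y1) \<le> ln (Kv v x)" for x
    using K_pos[of x y1] by (subst ln_le_cancel_iff) (auto intro: less_le_trans)
  then have "(\<Sum>x\<in>UNIV. \<mu> x * ln (K x y1)) \<le> (\<Sum>x\<in>UNIV. \<mu> x * ln (Kv v x))"
    using K_pos mu_pos by (intro sum_mono mult_left_mono) (auto intro: less_imp_le)
  moreover have "Lb \<le> (\<Sum>x\<in>UNIV. \<mu> x * ln (K x y1))" unfolding Lb_def by (rule Min_le) auto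
  moreover have "(\<Sum>y\<in>UNIV. \<nu> y * ln (v y)) \<le> \<nu> y0 * ln (v y0)"
  proof -
    have "(\<Sum>y\<in>UNIV. \<nu> y * ln (v y)) = \<nu> y0 * ln (v y0) + (\<Sum>y\<in>UNIV - {y0}. \<nu> y * ln (v y))"
      by (simp add: sum.remove)
    moreover have "(\<Sum>y\<in>UNIV - {y0}. \<nu> y * ln (v y)) \<le> 0"
      using vp le1 nu_pos by (intro sum_nonpos mult_nonneg_nonpos) (auto intro: less_imp_le)
    ultimately show ?thesis by simp
  qed
  ultimately show ?thesis unfolding F_def by simp
qed

lemma exists_fix: "\<exists>w. (\<forall>y. w y > 0) \<and> (\<forall>y. T w y = w y)"
proof -
  define one :: "'y \<Rightarrow> real" where "one = (\<lambda>_. 1)"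
  define a where "a = Lb - F one"
  define \<delta> where "\<delta> = min 1 (Min (range (\<lambda>y. exp (a / \<nu> y))))"
  have \<delta>p: "\<delta> > 0" unfolding \<delta>_def by (auto simp: Min_gr_iff)
  have \<delta>le: "\<delta> \<le> exp (a / \<nu> y)" for y unfolding \<delta>_def
    by (rule min.coboundedI2, rule Min_le) auto
  define S where "S = PiE (UNIV::'y set) (\<lambda>_. {\<delta>..1})"
  have memS: "v \<in> S \<longleftrightarrow> (\<forall>y. \<delta> \<le> v y \<and> v y \<le> 1)" for v
    by (simp add: S_def PiE_iff)
  have cS: "compact S"
  proof -
    have "compactin (product_topology (\<lambda>_. euclidean) UNIV) S"
      unfolding S_def by (simp add: compactin_PiE)
    then show ?thesis by (simp add: euclidean_product_topology)
  qed
  have oneS: "one \<in> S" using \<delta>_def by (simp add: memS one_def)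
  have posS: "v \<in> S \<Longrightarrow> v y > 0" for v y using memS \<delta>p by (meson less_le_trans)
  have cc: "continuous_on S (\<lambda>v. v y)" for y
    by (rule continuous_on_subset[OF continuous_on_product_coordinates]) simp
  have contF: "continuous_on S F"
    unfolding F_def Kv_def
    apply (intro continuous_intros cc)
    subgoal for x using Kv_pos[of _ x] posS unfolding Kv_def by (metis less_irrefl)
    subgoal for y using posS by (metis less_irrefl)
    done
  obtain w where wS: "w \<in> S" and wmin: "\<And>v. v \<in> S \<Longrightarrow> F w \<le> F v"
    using continuous_attains_inf[OF cS _ contF] oneS by blast
  have wp: "w y > 0" for y using posS[OF wS] .
  have glob: "F w \<le> F v" if vp: "\<And>y. v y > 0" for v
  proof (rule ccontr)
    assume nle: "\<not> F w \<le> F v"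
    define m where "m = Max (range v)"
    have "m \<in> range v" unfolding m_def by (rule Max_in) auto
    then obtain y1 where y1: "v y1 = m" by auto
    have mp: "m > 0" using y1 vp by metis
    have vm: "v y \<le> m" for y unfolding m_def by (rule Max_ge) auto
    define v' where "v' = (\<lambda>y. v y / m)"
    have v'p: "v' y > 0" for y using vp mp by (simp add: v'_def)
    have v'1: "v' y \<le> 1" for y using vm mp by (simp add: v'_def)
    have v'y1: "v' y1 = 1" using y1 mp by (simp add: v'_def)
    have Fv': "F v' = F v" unfolding v'_def by (rule F_hom[OF vp mp])
    have "F v' \<le> F one" using nle wmin[OF oneS] Fv' by simp
    have "v' \<in> S" unfolding memS
    proof (intro allI conjI)
      fix y
      have "Lb - \<nu> y * ln (v' y) \<le> F one"
        using F_lower[of v' y1 y, OF v'p v'1 v'y1] \<open>F v' \<le> F one\<close> by simp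
      then have "a \<le> \<nu> y * ln (v' y)" unfolding a_def by simp
      then have "a / \<nu> y \<le> ln (v' y)" using nu_pos[of y] by (simp add: divide_le_eq mult.commute)
      then have "exp (a / \<nu> y) \<le> v' y" using v'p[of y] by (metis exp_le_cancel_iff exp_ln)
      then show "\<delta> \<le> v' y" using \<delta>le[of y] by simp
      show "v' y \<le> 1" by (rule v'1)
    qed
    then have "F w \<le> F v'" by (rule wmin)
    then show False using nle Fv' by simp
  qed
  have ge: "w y \<le> T w y" for y
  proof (rule ccontr)
    assume "\<not> w y \<le> T w y"
    then have "T w y < w y" by simp
    then have "F (\<lambda>y. min (w y) (T w y)) < F w" by (rule descent[OF wp])
    moreover have "F w \<le> F (\<lambda>y. min (w y) (T w y))"
      by (rule glob) (simp add: wp T_pos[OF wp])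
    ultimately show False by simp
  qed
  show ?thesis using wp fix_of_ge[OF wp ge] by blast
qed


lemma async_Suc: "async_v \<mu> \<nu> K v0 (Suc l) y = min (async_v \<mu> \<nu> K v0 l y) (T (async_v \<mu> \<nu> K v0 l) y)"
  by (simp add: T_def Let_def)

lemma tendsto_u:
  assumes lim: "\<And>y. (\<lambda>l. V l y) \<longlonglongrightarrow> v y" and vp: "\<And>y. v y > 0"
  shows "(\<lambda>l. u_upd \<mu> K (V l) x) \<longlonglongrightarrow> u_upd \<mu> K v x"
proof -
  have "Kv v x \<noteq> 0" using Kv_pos[of v x] vp by simp
  then show ?thesis unfolding u_eq Kv_def
    by (intro tendsto_intros lim) simp
qed

lemma tendsto_T:
  assumes lim: "\<And>y. (\<lambda>l. V l y) \<longlonglongrightarrow> v y" and vp: "\<And>y. v y > 0"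
  shows "(\<lambda>l. T (V l) y) \<longlonglongrightarrow> T v y"
proof -
  have "W (u_upd \<mu> K v) y \<noteq> 0" using Wu_pos[of v y] vp by simp
  then show ?thesis unfolding T_eq W_def
    by (intro tendsto_intros tendsto_u[OF lim vp]) simp
qed

lemma main:
  assumes v0p: "\<And>y. v0 y > 0"
  shows "\<exists>u v. (\<forall>x. u x > 0) \<and> (\<forall>y. v y > 0)
     \<and> (\<forall>x. (\<Sum>y\<in>UNIV. u x * K x y * v y) = \<mu> x)
     \<and> (\<forall>y. (\<Sum>x\<in>UNIV. u x * K x y * v y) = \<nu> y)
     \<and> (\<forall>x. (\<lambda>l. async_u \<mu> \<nu> K v0 l x) \<longlonglongrightarrow> u x)
     \<and> (\<forall>y. (\<lambda>l. async_v \<mu> \<nu> K v0 l y) \<longlonglongrightarrow> v y)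
     \<and> (\<lambda>l. async_q \<mu> \<nu> K v0 l) \<longlonglongrightarrow> 1"
proof -
  define vs where "vs = async_v \<mu> \<nu> K v0"
  have vsS: "vs (Suc l) y = min (vs l y) (T (vs l) y)" for l y
    unfolding vs_def by (rule async_Suc)
  obtain w where wp: "\<And>y. w y > 0" and wT: "\<And>y. T w y = w y" using exists_fix by blast
  define t where "t = Min (range (\<lambda>y. v0 y / w y))"
  have tp: "t > 0" unfolding t_def using v0p wp by (auto simp: Min_gr_iff)
  have low: "t * w y \<le> vs l y" for l y
  proof (induction l arbitrary: y)
    case 0
    have "t \<le> v0 y / w y" unfolding t_def by (rule Min_le) auto
    then show ?case using wp[of y] by (simp add: vs_def field_simps)
  next
    case (Suc l)
    have twp: "\<And>y. t * w y > 0" using tp wp by simp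
    have "T (\<lambda>y. t * w y) y \<le> T (vs l) y" by (rule T_mono[OF twp Suc.IH])
    then have "t * w y \<le> T (vs l) y" using T_hom[OF tp, of w y] wT[of y] by simp
    then show ?case using Suc.IH[of y] by (simp add: vsS)
  qed
  have vsp: "vs l y > 0" for l y using low[of y l] tp wp[of y] by (smt (verit) mult_pos_pos)
  have dec: "decseq (\<lambda>l. vs l y)" for y by (rule decseq_SucI) (simp add: vsS)
  have conv: "convergent (\<lambda>l. vs l y)" for y
  proof -
    obtain L where "(\<lambda>l. vs l y) \<longlonglongrightarrow> L" using decseq_convergent[OF dec, of 0 y] vsp
      by (meson less_imp_le)
    then show ?thesis by (auto simp: convergent_def)
  qed
  define vst where "vst y = lim (\<lambda>l. vs l y)" for y
  have lim: "(\<lambda>l. vs l y) \<longlonglongrightarrow> vst y" for y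
    unfolding vst_def using conv convergent_LIMSEQ_iff by blast
  have vstp: "vst y > 0" for y
  proof -
    have "t * w y \<le> vst y" by (rule LIMSEQ_le_const[OF lim]) (use low in blast)
    then show ?thesis using tp wp[of y] by (smt (verit) mult_pos_pos)
  qed
  have limS: "(\<lambda>l. vs (Suc l) y) \<longlonglongrightarrow> vst y" for y using lim LIMSEQ_Suc by blast
  have "(\<lambda>l. vs (Suc l) y) \<longlonglongrightarrow> min (vst y) (T vst y)" for y
    unfolding vsS by (intro tendsto_min lim tendsto_T[OF lim vstp])
  then have "vst y = min (vst y) (T vst y)" for y using limS LIMSEQ_unique by blast
  then have ge: "vst y \<le> T vst y" for y by (metis min.absorb_iff1)
  have fixv: "T vst y = vst y" for y by (rule fix_of_ge[OF vstp ge])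
  define ust where "ust = u_upd \<mu> K vst"
  have ustp: "ust x > 0" for x unfolding ust_def by (rule u_pos[OF vstp])
  have row: "(\<Sum>y\<in>UNIV. ust x * K x y * vst y) = \<mu> x" for x
  proof -
    have "(\<Sum>y\<in>UNIV. ust x * K x y * vst y) = ust x * Kv vst x"
      unfolding Kv_def by (simp add: sum_distrib_left mult.assoc)
    then show ?thesis using uKv[OF vstp] ust_def by simp
  qed
  have col: "(\<Sum>x\<in>UNIV. ust x * K x y * vst y) = \<nu> y" for y
  proof -
    have "(\<Sum>x\<in>UNIV. ust x * K x y * vst y) = W ust y * T vst y"
      unfolding W_def fixv by (simp add: sum_distrib_left sum_distrib_right mult_ac)
    then show ?thesis using WT[OF vstp] ust_def by simp
  qed
  have limu: "(\<lambda>l. async_u \<mu> \<nu> K v0 l x) \<longlonglongrightarrow> ust x" for x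
    unfolding async_u_def ust_def vs_def[symmetric] by (rule tendsto_u[OF lim vstp])
  have "(\<lambda>l. async_q \<mu> \<nu> K v0 l) \<longlonglongrightarrow> (\<Sum>x\<in>UNIV. \<Sum>y\<in>UNIV. ust x * K x y * vst y)"
    unfolding async_q_def vs_def[symmetric] by (intro tendsto_intros limu limS)
  moreover have "(\<Sum>x\<in>UNIV. \<Sum>y\<in>UNIV. ust x * K x y * vst y) = 1" using row mu_sum by simp
  ultimately have limq: "(\<lambda>l. async_q \<mu> \<nu> K v0 l) \<longlonglongrightarrow> 1" by simp
  show ?thesis
    apply (rule exI[of _ ust], rule exI[of _ vst])
    using ustp vstp row col limu lim limq by (simp add: vs_def)
qed

end

theorem mainTheorem5:
  fixes \<mu> :: "'x::finite \<Rightarrow> real" and \<nu> :: "'y::finite \<Rightarrow> real"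
    and c :: "'x \<Rightarrow> 'y \<Rightarrow> real" and \<epsilon> :: real and v0 :: "'y \<Rightarrow> real"
  assumes \<mu>_pos: "\<And>x. \<mu> x > 0" and \<mu>_sum: "(\<Sum>x\<in>UNIV. \<mu> x) = 1"
    and \<nu>_pos: "\<And>y. \<nu> y > 0" and \<nu>_sum: "(\<Sum>y\<in>UNIV. \<nu> y) = 1"
    and c_nonneg: "\<And>x y. c x y \<ge> 0"
    and \<epsilon>_pos: "\<epsilon> > 0"
    and v0_pos: "\<And>y. v0 y > 0"
  shows "\<exists>u v. (\<forall>x. u x > 0) \<and> (\<forall>y. v y > 0)
     \<and> (\<forall>x. (\<Sum>y\<in>UNIV. u x * kernel \<mu> \<nu> c \<epsilon> x y * v y) = \<mu> x)
     \<and> (\<forall>y. (\<Sum>x\<in>UNIV. u x * kernel \<mu> \<nu> c \<epsilon> x y * v y) = \<nu> y)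
     \<and> (\<forall>x. (\<lambda>l. async_u \<mu> \<nu> (kernel \<mu> \<nu> c \<epsilon>) v0 l x) \<longlonglongrightarrow> u x)
     \<and> (\<forall>y. (\<lambda>l. async_v \<mu> \<nu> (kernel \<mu> \<nu> c \<epsilon>) v0 l y) \<longlonglongrightarrow> v y)
     \<and> (\<lambda>l. async_q \<mu> \<nu> (kernel \<mu> \<nu> c \<epsilon>) v0 l) \<longlonglongrightarrow> 1"
proof -
  interpret sk \<mu> \<nu> "kernel \<mu> \<nu> c \<epsilon>"
    by unfold_locales (auto simp: kernel_def \<mu>_pos \<nu>_pos \<mu>_sum \<nu>_sum)
  show ?thesis by (rule main[OF v0_pos])
qed

end
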